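(* Let $\mathcal S\subset\mathbb R^n$ be a finite positive spanning set of unit vectors and $P=\{x\in\mathbb R^n: x^\top d\le 1 \text{ for all } d\in\mathcal S\}$. (i) Let $x$ be a vertex of $P$, $\mathcal T=\{d\in\mathcal S: x^\top d=1\}$, and let $\mathcal B\subseteq\mathcal T$ be a basis of $\mathbb R^n$. Then $\frac{x}{\|x\|}$ is a Gram vector of $\mathcal B$ with Gram value $\frac1{\|x\|}$, and $K^\circ\!\left(\mathcal B,\frac{x}{\|x\|}\right)\cap\mathcal S=\varnothing$. (ii) Let $\mathcal B\subseteq\mathcal S$ be a basis of $\mathbb R^n$ and $u$ the Gram vector of $\mathcal B$ with Gram value $\alpha$. If $K^\circ(\mathcal B,u)\cap\mathcal S=\varnothing$, then $\frac u\alpha$ is the unique vertex of $P$ such that $\left(\frac u\alpha\right)^\top d=1$ for all $d\in\mathcal B$.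
   Context: A finite set $\{d_1,\dots,d_k\}\subset\mathbb R^n$ is positive spanning if $\{\sum_i\lambda_id_i:\lambda_i\ge0\}=\mathbb R^n$. For a basis $\mathcal B=\{d_1,\dots,d_n\}$ of $\mathbb R^n$, a Gram vector of $\mathcal B$ with Gram value $\gamma_{\mathcal B}$ is a unit vector $u$ with $u^\top d_i=\gamma_{\mathcal B}>0$ for all $i$. For a set $\mathcal B$ of unit vectors and a unit vector $y$ with $d^\top y=\alpha_{\mathcal B}$ for all $d\in\mathcal B$ (a common value), $K^\circ(\mathcal B,y)=\{v\in\mathbb R^n: v\ne\mathbf 0,\ \frac{v^\top y}{\|v\|\|y\|}>\alpha_{\mathcal B}\}\cup\{\mathbf 0\}$. *)

theory Defs
  imports "HOL-Analysis.Analysis"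
begin

definition positive_spanning :: "'a::euclidean_space set \<Rightarrow> bool" where
  "positive_spanning S \<longleftrightarrow>
     {(\<Sum>d\<in>S. c d *\<^sub>R d) | c. \<forall>d\<in>S. c d \<ge> 0} = UNIV"

definition is_basis :: "'a::euclidean_space set \<Rightarrow> bool" where
  "is_basis B \<longleftrightarrow> independent B \<and> span B = UNIV"

definition gram_vector :: "'a::euclidean_space set \<Rightarrow> 'a \<Rightarrow> real \<Rightarrow> bool" where
  "gram_vector B u g \<longleftrightarrow> norm u = 1 \<and> g > 0 \<and> (\<forall>d\<in>B. u \<bullet> d = g)"

text \<open>The open cone K(B,y); alpha is the common value of d.y for d in B.\<close>
definition Kcirc :: "'a::euclidean_space \<Rightarrow> real \<Rightarrow> 'a set" where
  "Kcirc y \<alpha> = {v. v \<noteq> 0 \<and> (v \<bullet> y) / (norm v * norm y) > \<alpha>} \<union> {0}"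

definition polytope_P :: "'a::euclidean_space set \<Rightarrow> 'a set" where
  "polytope_P S = {x. \<forall>d\<in>S. x \<bullet> d \<le> 1}"

end

theory Submission
  imports Defs
begin

lemma zero_of_span:
  fixes z :: "'a::euclidean_space"
  assumes "span B = UNIV" "\<forall>d\<in>B. z \<bullet> d = 0"
  shows "z = 0"
proof -
  have "orthogonal z z"
    by (rule orthogonal_to_span[of z B]) (use assms in \<open>auto simp: orthogonal_def\<close>)
  then show ?thesis by (simp add: orthogonal_def)
qed

lemma basis_nonempty:
  assumes "is_basis (B :: 'a::euclidean_space set)"
  shows "B \<noteq> {}"
proof
  assume "B = {}"
  then have "span B = {0}" by simp
  moreover obtain b :: 'a where "b \<in> Basis" using nonempty_Basis by blast
  then have "b \<noteq> 0" by auto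
  ultimately show False using assms unfolding is_basis_def by auto
qed

theorem theorem8:
  fixes S :: "'a::euclidean_space set"
  assumes fin: "finite S"
    and ps: "positive_spanning S"
    and unit: "\<forall>d\<in>S. norm d = 1"
  shows
    "(\<forall>x B. x extreme_point_of polytope_P S \<longrightarrow>
        B \<subseteq> {d\<in>S. x \<bullet> d = 1} \<longrightarrow> is_basis B \<longrightarrow>
        gram_vector B ((1 / norm x) *\<^sub>R x) (1 / norm x) \<and>
        (\<forall>d\<in>B. d \<bullet> ((1 / norm x) *\<^sub>R x) = 1 / norm x) \<and>
        Kcirc ((1 / norm x) *\<^sub>R x) (1 / norm x) \<inter> S = {})
   \<and> (\<forall>B u \<alpha>. B \<subseteq> S \<longrightarrow> is_basis B \<longrightarrow> gram_vector B u \<alpha> \<longrightarrow>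
        Kcirc u \<alpha> \<inter> S = {} \<longrightarrow>
        ((1 / \<alpha>) *\<^sub>R u) extreme_point_of polytope_P S \<and>
        (\<forall>d\<in>B. ((1 / \<alpha>) *\<^sub>R u) \<bullet> d = 1) \<and>
        (\<forall>y. y extreme_point_of polytope_P S \<and> (\<forall>d\<in>B. y \<bullet> d = 1)
              \<longrightarrow> y = (1 / \<alpha>) *\<^sub>R u))"
proof (rule conjI, goal_cases)
  case 1
  show ?case
  proof (intro conjI allI impI)
  have S0: "0 \<notin> S" using unit by force
  fix x B
  assume ext: "x extreme_point_of polytope_P S" and BT: "B \<subseteq> {d\<in>S. x \<bullet> d = 1}"
    and bas: "is_basis B"
  have xP: "\<forall>d\<in>S. x \<bullet> d \<le> 1" using ext unfolding extreme_point_of_def polytope_P_def by auto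
  obtain d0 where "d0 \<in> B" using basis_nonempty[OF bas] by auto
  with BT have "x \<bullet> d0 = 1" by auto
  then have x0: "x \<noteq> 0" by auto
  then have nx: "norm x > 0" by simp
  show "gram_vector B ((1 / norm x) *\<^sub>R x) (1 / norm x)"
    unfolding gram_vector_def using BT nx by auto
  show "\<forall>d\<in>B. d \<bullet> ((1 / norm x) *\<^sub>R x) = 1 / norm x"
    using BT by (auto simp: inner_commute)
  show "Kcirc ((1 / norm x) *\<^sub>R x) (1 / norm x) \<inter> S = {}"
  proof (rule ccontr)
    assume "Kcirc ((1 / norm x) *\<^sub>R x) (1 / norm x) \<inter> S \<noteq> {}"
    then obtain d where dS: "d \<in> S" and dK: "d \<in> Kcirc ((1 / norm x) *\<^sub>R x) (1 / norm x)" by auto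
    have "d \<noteq> 0" using dS S0 by auto
    then have "(d \<bullet> ((1 / norm x) *\<^sub>R x)) / (norm d * norm ((1 / norm x) *\<^sub>R x)) > 1 / norm x"
      using dK unfolding Kcirc_def by auto
    moreover have "norm d = 1" using unit dS by auto
    moreover have "norm ((1 / norm x) *\<^sub>R x) = 1" using nx by simp
    ultimately have "(d \<bullet> x) / norm x > 1 / norm x" by simp
    then have "d \<bullet> x > 1" using nx by (simp add: divide_strict_right_mono_neg field_simps)
    with xP dS show False by (auto simp: inner_commute)
  qed
  qed
next
  case 2
  show ?case
  proof (intro allI impI)
  have S0: "0 \<notin> S" using unit by force
  fix B u \<alpha>
  assume BS: "B \<subseteq> S" and bas: "is_basis B" and g: "gram_vector B u \<alpha>"
    and K: "Kcirc u \<alpha> \<inter> S = {}"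
  have nu: "norm u = 1" and ap: "\<alpha> > 0" and uB: "\<forall>d\<in>B. u \<bullet> d = \<alpha>"
    using g unfolding gram_vector_def by auto
  have sp: "span B = UNIV" using bas unfolding is_basis_def by auto
  have yB: "\<forall>d\<in>B. ((1 / \<alpha>) *\<^sub>R u) \<bullet> d = 1" using uB ap by auto
  have yP: "(1 / \<alpha>) *\<^sub>R u \<in> polytope_P S"
    unfolding polytope_P_def
  proof (intro CollectI ballI)
    fix d assume dS: "d \<in> S"
    have "d \<notin> Kcirc u \<alpha>" using K dS by auto
    moreover have "d \<noteq> 0" using dS S0 by auto
    moreover have "norm d = 1" using unit dS by auto
    ultimately have "d \<bullet> u \<le> \<alpha>" unfolding Kcirc_def using nu by auto
    then show "((1 / \<alpha>) *\<^sub>R u) \<bullet> d \<le> 1" using ap by (simp add: inner_commute field_simps)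
  qed
  have ext: "((1 / \<alpha>) *\<^sub>R u) extreme_point_of polytope_P S"
    unfolding extreme_point_of_def
  proof (intro conjI ballI)
    show "(1 / \<alpha>) *\<^sub>R u \<in> polytope_P S" by (rule yP)
    fix a b assume aP: "a \<in> polytope_P S" and bP: "b \<in> polytope_P S"
    show "(1 / \<alpha>) *\<^sub>R u \<notin> open_segment a b"
    proof
      assume "(1 / \<alpha>) *\<^sub>R u \<in> open_segment a b"
      then obtain t where ab: "a \<noteq> b" and t: "0 < t" "t < 1"
        and eq: "(1 / \<alpha>) *\<^sub>R u = (1 - t) *\<^sub>R a + t *\<^sub>R b"
        by (auto simp: in_segment)
      have "\<forall>d\<in>B. (a - b) \<bullet> d = 0"
      proof
        fix d assume dB: "d \<in> B"
        have ad: "a \<bullet> d \<le> 1" and bd: "b \<bullet> d \<le> 1"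
          using aP bP dB BS unfolding polytope_P_def by auto
        have "(1 - t) * (a \<bullet> d) + t * (b \<bullet> d) = 1"
          using yB dB eq by (metis inner_add_left inner_scaleR_left)
        moreover have "(1 - t) * (a \<bullet> d) \<le> 1 - t" using ad t by (simp add: mult_left_le)
        moreover have "t * (b \<bullet> d) \<le> t" using bd t by (simp add: mult_left_le)
        ultimately have e1: "(1 - t) * (a \<bullet> d) = 1 - t" and e2: "t * (b \<bullet> d) = t" by linarith+
        have "a \<bullet> d = 1" using e1 t by simp
        moreover have "b \<bullet> d = 1" using e2 t by simp
        ultimately show "(a - b) \<bullet> d = 0" by (simp add: inner_diff_left)
      qed
      then have "a - b = 0" using zero_of_span[OF sp] by blast
      with ab show False by simp
    qed
  qed
  have uniq: "\<forall>y. y extreme_point_of polytope_P S \<and> (\<forall>d\<in>B. y \<bullet> d = 1) \<longrightarrow> y = (1 / \<alpha>) *\<^sub>R u"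
  proof (intro allI impI)
    fix y assume "y extreme_point_of polytope_P S \<and> (\<forall>d\<in>B. y \<bullet> d = 1)"
    then have "\<forall>d\<in>B. (y - (1 / \<alpha>) *\<^sub>R u) \<bullet> d = 0" using yB by (auto simp: inner_diff_left)
    then have "y - (1 / \<alpha>) *\<^sub>R u = 0" using zero_of_span[OF sp] by blast
    then show "y = (1 / \<alpha>) *\<^sub>R u" by simp
  qed
  show "((1 / \<alpha>) *\<^sub>R u) extreme_point_of polytope_P S \<and>
        (\<forall>d\<in>B. ((1 / \<alpha>) *\<^sub>R u) \<bullet> d = 1) \<and>
        (\<forall>y. y extreme_point_of polytope_P S \<and> (\<forall>d\<in>B. y \<bullet> d = 1)
              \<longrightarrow> y = (1 / \<alpha>) *\<^sub>R u)" using ext yB uniq by blast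
  qed
qed

end
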